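(* For $n\ge1$, the subleading coefficient $p(n,\vec t)$ of $P_n$ satisfies \[ p(n,\vec t)=\sum_{k=1}^m t_kr_{n,k}-\beta_n=-\sum_{k=1}^m t_k\sum_{j=0}^{n-1}R_{j,k}-n(n+\alpha). \]
   Context: Let $m\ge1$, $\alpha>-1$, $0<t_1<\dots<t_m$, real $\omega_0,\dots,\omega_m$ with $\sum_{k=0}^\ell\omega_k\ge0$ for $\ell=0,\dots,m$, $\theta$ the Heaviside function, $w_0(x)=x^\alpha e^{-x}$, $w(x;\vec t)=w_0(x)\big(\omega_0+\sum_k\omega_k\theta(x-t_k)\big)$ on $[0,\infty)$, $P_n(x;\vec t)=x^n+p(n,\vec t)x^{n-1}+\dots$ the monic orthogonal polynomials w.r.t. $w$, $h_n=\int_0^\infty P_n^2w\,dx$, $\beta_n=h_n/h_{n-1}$, $R_{n,k}=\omega_k\frac{w_0(t_k)}{h_n}P_n^2(t_k)$, $r_{n,k}=\omega_k\frac{w_0(t_k)}{h_{n-1}}P_n(t_k)P_{n-1}(t_k)$. *)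

theory Defs
  imports "HOL-Analysis.Analysis" "HOL-Computational_Algebra.Polynomial"
begin

text \<open>Heaviside step function (the value at 0 is irrelevant for all integrals below).\<close>
definition heaviside :: "real \<Rightarrow> real" where
  "heaviside x = (if x \<ge> 0 then 1 else 0)"

definition w0 :: "real \<Rightarrow> real \<Rightarrow> real" where
  "w0 \<alpha> x = x powr \<alpha> * exp (- x)"

definition wt :: "real \<Rightarrow> nat \<Rightarrow> (nat \<Rightarrow> real) \<Rightarrow> (nat \<Rightarrow> real) \<Rightarrow> real \<Rightarrow> real" where
  "wt \<alpha> m \<omega> t x = w0 \<alpha> x * (\<omega> 0 + (\<Sum>k=1..m. \<omega> k * heaviside (x - t k)))"

definition monic_OPS :: "real \<Rightarrow> nat \<Rightarrow> (nat \<Rightarrow> real) \<Rightarrow> (nat \<Rightarrow> real) \<Rightarrow> (nat \<Rightarrow> real poly) \<Rightarrow> bool" where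
  "monic_OPS \<alpha> m \<omega> t P \<longleftrightarrow>
     (\<forall>n. degree (P n) = n \<and> lead_coeff (P n) = 1 \<and>
        (\<forall>j<n. (LBINT x:{0..}. poly (P n) x * x ^ j * wt \<alpha> m \<omega> t x) = 0))"

definition hn :: "real \<Rightarrow> nat \<Rightarrow> (nat \<Rightarrow> real) \<Rightarrow> (nat \<Rightarrow> real) \<Rightarrow> (nat \<Rightarrow> real poly) \<Rightarrow> nat \<Rightarrow> real" where
  "hn \<alpha> m \<omega> t P n = (LBINT x:{0..}. (poly (P n) x)\<^sup>2 * wt \<alpha> m \<omega> t x)"

definition betan :: "real \<Rightarrow> nat \<Rightarrow> (nat \<Rightarrow> real) \<Rightarrow> (nat \<Rightarrow> real) \<Rightarrow> (nat \<Rightarrow> real poly) \<Rightarrow> nat \<Rightarrow> real" where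
  "betan \<alpha> m \<omega> t P n = hn \<alpha> m \<omega> t P n / hn \<alpha> m \<omega> t P (n - 1)"

definition Rnk :: "real \<Rightarrow> nat \<Rightarrow> (nat \<Rightarrow> real) \<Rightarrow> (nat \<Rightarrow> real) \<Rightarrow> (nat \<Rightarrow> real poly) \<Rightarrow> nat \<Rightarrow> nat \<Rightarrow> real" where
  "Rnk \<alpha> m \<omega> t P n k = \<omega> k * w0 \<alpha> (t k) / hn \<alpha> m \<omega> t P n * (poly (P n) (t k))\<^sup>2"

definition rnk :: "real \<Rightarrow> nat \<Rightarrow> (nat \<Rightarrow> real) \<Rightarrow> (nat \<Rightarrow> real) \<Rightarrow> (nat \<Rightarrow> real poly) \<Rightarrow> nat \<Rightarrow> nat \<Rightarrow> real" where
  "rnk \<alpha> m \<omega> t P n k = \<omega> k * w0 \<alpha> (t k) / hn \<alpha> m \<omega> t P (n - 1) * poly (P n) (t k) * poly (P (n - 1)) (t k)"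

end

theory Submission
  imports Defs "HOL-Real_Asymp.Real_Asymp"
begin

lemma mono_int:
  fixes a :: real assumes "a > -1"
  shows "set_integrable lborel {0..} (\<lambda>x. x powr a * exp (- x))"
proof -
  have "((\<lambda>t. t powr (a + 1 - 1) / exp t) has_integral Gamma (a+1)) {0..}"
    by (rule Gamma_integral_real) (use assms in auto)
  hence "(\<lambda>t. t powr a * exp (-t)) integrable_on {0..}"
    by (simp add: exp_minus field_simps integrable_on_def) blast
  hence "(\<lambda>t. t powr a * exp (-t)) absolutely_integrable_on {0..}"
    by (subst absolutely_integrable_on_iff_nonneg) auto
  thus ?thesis unfolding set_integrable_def
    by (subst (asm) integrable_completion) auto
qed

lemma set_integrable_sum':
  fixes f :: "nat \<Rightarrow> real \<Rightarrow> real"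
  assumes "\<And>i. i \<in> I \<Longrightarrow> set_integrable lborel A (f i)"
  shows "set_integrable lborel A (\<lambda>x. \<Sum>i\<in>I. f i x)"
proof -
  have "integrable lborel (\<lambda>x. \<Sum>i\<in>I. indicator A x *\<^sub>R f i x)"
    using assms unfolding set_integrable_def by (intro Bochner_Integration.integrable_sum) auto
  thus ?thesis unfolding set_integrable_def by (simp add: sum_distrib_left)
qed

lemma poly_w0_expand:
  assumes "x \<ge> 0"
  shows "poly Q x * w0 \<alpha> x = (\<Sum>i\<le>degree Q. coeff Q i * (x powr (\<alpha> + real i) * exp (- x)))"
proof -
  have "x ^ i * x powr \<alpha> = x powr (\<alpha> + real i)" for i
  proof (cases "x = 0")
    case True thus ?thesis by simp
  next
    case False thus ?thesis using assms by (simp add: powr_add powr_realpow)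
  qed
  thus ?thesis unfolding poly_altdef w0_def sum_distrib_right
    by (intro sum.cong) (auto simp: mult_ac)
qed

lemma poly_w0_int:
  fixes \<alpha> c :: real
  assumes "c \<ge> 0" "\<alpha> > -1"
  shows "set_integrable lborel {c..} (\<lambda>x. poly Q x * w0 \<alpha> x)"
proof -
  have "set_integrable lborel {0..} (\<lambda>x. \<Sum>i\<le>degree Q. coeff Q i * (x powr (\<alpha> + real i) * exp (- x)))"
    using assms by (intro set_integrable_sum' set_integrable_mult_right mono_int) auto
  hence "set_integrable lborel {0..} (\<lambda>x. poly Q x * w0 \<alpha> x)"
    by (rule iffD1[OF set_integrable_cong, rotated 3]) (auto simp: poly_w0_expand)
  thus ?thesis
    by (rule set_integrable_subset) (use assms in auto)
qed

definition Lop :: "real \<Rightarrow> real poly \<Rightarrow> real poly" where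
  "Lop \<alpha> Q = pCons 0 (pderiv Q) + smult (\<alpha>+1) Q - pCons 0 Q"

lemma F_lim_top: fixes \<alpha> :: real shows
  "((\<lambda>x. x powr (\<alpha>+1) * exp (-x) * poly Q x) \<longlongrightarrow> 0) at_top"
proof -
  have "((\<lambda>x. \<Sum>i\<le>degree Q. coeff Q i * (x powr (\<alpha> + 1 + real i) * exp (-x))) \<longlongrightarrow> (\<Sum>i\<le>degree Q. coeff Q i * 0)) at_top"
    by (intro tendsto_sum tendsto_mult tendsto_const) real_asymp
  hence "((\<lambda>x. \<Sum>i\<le>degree Q. coeff Q i * (x powr (\<alpha> + 1 + real i) * exp (-x))) \<longlongrightarrow> 0) at_top" by simp
  moreover have "eventually (\<lambda>x. (\<Sum>i\<le>degree Q. coeff Q i * (x powr (\<alpha> + 1 + real i) * exp (-x))) = x powr (\<alpha>+1) * exp (-x) * poly Q x) at_top"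
    using eventually_gt_at_top[of 0]
  proof eventually_elim
    case (elim x)
    thus ?case unfolding poly_altdef sum_distrib_left
      by (intro sum.cong) (auto simp: powr_add powr_realpow mult_ac)
  qed
  ultimately show ?thesis by (rule Lim_transform_eventually)
qed

lemma F_lim_right:
  fixes \<alpha> c :: real
  assumes "c \<ge> 0" "\<alpha> > -1"
  shows "((\<lambda>x. x powr (\<alpha>+1) * exp (-x) * poly Q x) \<longlongrightarrow> c powr (\<alpha>+1) * exp (-c) * poly Q c) (at_right c)"
proof (cases "c = 0")
  case True
  have "((\<lambda>x. x powr (\<alpha>+1)) \<longlongrightarrow> 0) (at_right 0)"
  proof (rule tendsto_zero_powrI[where f="\<lambda>x. x" and g="\<lambda>x. \<alpha>+1"])
    show "\<forall>\<^sub>F x in at_right 0. 0 \<le> (x::real)"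
      by (rule eventually_at_rightI[of 0 1]) auto
  qed (use assms in \<open>auto intro!: tendsto_eq_intros\<close>)
  hence "((\<lambda>x. x powr (\<alpha>+1) * exp (-x) * poly Q x) \<longlongrightarrow> 0 * exp (-0) * poly Q 0) (at_right 0)"
    by (intro tendsto_intros) (auto intro!: tendsto_eq_intros)
  thus ?thesis using True by simp
next
  case False
  hence "isCont (\<lambda>x. x powr (\<alpha>+1) * exp (-x) * poly Q x) c"
    by (auto intro!: continuous_intros)
  thus ?thesis
    by (simp add: continuous_at_imp_continuous_within isCont_def filterlim_at_split tendsto_within_subset)
qed

lemma F_deriv:
  fixes \<alpha> x :: real
  assumes "x > 0"
  shows "((\<lambda>x. x powr (\<alpha>+1) * exp (-x) * poly Q x) has_real_derivative (poly (Lop \<alpha> Q) x * w0 \<alpha> x)) (at x)"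
proof -
  have "((\<lambda>x. x powr (\<alpha>+1) * exp (-x) * poly Q x) has_real_derivative
     ((\<alpha>+1) * x powr (\<alpha>+1-1) * exp(-x) * poly Q x + x powr (\<alpha>+1) * (-exp(-x)) * poly Q x + x powr (\<alpha>+1)*exp(-x)*poly (pderiv Q) x)) (at x)"
    using assms by (auto intro!: derivative_eq_intros simp: algebra_simps)
  moreover have "x powr (\<alpha>+1) = x * x powr \<alpha>" using assms by (simp add: powr_add)
  ultimately show ?thesis
    by (simp add: Lop_def w0_def algebra_simps)
qed

lemma G_FTC:
  fixes \<alpha> c :: real
  assumes c: "c \<ge> 0" and a: "\<alpha> > -1"
  shows "(LBINT x:{c..}. poly (Lop \<alpha> Q) x * w0 \<alpha> x) = - (c powr (\<alpha>+1) * exp (-c) * poly Q c)"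
proof -
  define f where "f = (\<lambda>x. poly (Lop \<alpha> Q) x * w0 \<alpha> x)"
  define F where "F = (\<lambda>x::real. x powr (\<alpha>+1) * exp (-x) * poly Q x)"
  have int: "set_integrable lborel {c..} f" unfolding f_def by (rule poly_w0_int[OF c a])
  have int2: "set_integrable lborel {c<..} f" by (rule set_integrable_subset[OF int]) auto
  have "(LBINT x:{c..}. f x) = (LBINT x:{c<..}. f x)"
  proof (rule set_integral_cong_set)
    show "set_borel_measurable lborel {c<..} f" "set_borel_measurable lborel {c..} f"
      using int int2 unfolding set_integrable_def set_borel_measurable_def
      by (auto intro: borel_measurable_integrable)
    show "AE x in lborel. (x \<in> {c<..}) = (x \<in> {c..})"
      using AE_lborel_singleton[of c] by eventually_elim auto
  qed
  also have "\<dots> = (LBINT x=ereal c..\<infinity>. f x)"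
    by (rule interval_integral_to_infinity_eq[symmetric])
  also have "\<dots> = 0 - F c"
  proof (rule interval_integral_FTC_integrable)
    fix x assume "ereal c < ereal x" "ereal x < \<infinity>"
    hence x: "x > 0" using c by auto
    show "(F has_vector_derivative f x) (at x)"
      unfolding F_def f_def using F_deriv[OF x]
      by (simp add: has_real_derivative_iff_has_vector_derivative)
    show "isCont f x" unfolding f_def w0_def using x by (auto intro!: continuous_intros)
  next
    show "set_integrable lborel (einterval (ereal c) \<infinity>) f" using int2 by simp
    show "((F \<circ> real_of_ereal) \<longlongrightarrow> F c) (at_right (ereal c))"
      unfolding ereal_tendsto_simps1 F_def by (rule F_lim_right[OF c a])
    show "((F \<circ> real_of_ereal) \<longlongrightarrow> 0) (at_left \<infinity>)"
      unfolding ereal_tendsto_simps1 F_def by (rule F_lim_top)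
  qed simp
  finally show ?thesis by (simp add: f_def F_def)
qed

definition Phi :: "real \<Rightarrow> nat \<Rightarrow> (nat \<Rightarrow> real) \<Rightarrow> (nat \<Rightarrow> real) \<Rightarrow> real poly \<Rightarrow> real" where
  "Phi \<alpha> m \<omega> t Q = (LBINT x:{0..}. poly Q x * wt \<alpha> m \<omega> t x)"

lemma wt_split:
  assumes "\<And>k. k \<in> {1..m} \<Longrightarrow> t k \<ge> 0"
  shows "indicator {0..} x * (poly Q x * wt \<alpha> m \<omega> t x) =
    \<omega> 0 * (indicator {0..} x * (poly Q x * w0 \<alpha> x)) +
    (\<Sum>k=1..m. \<omega> k * (indicator {t k..} x * (poly Q x * w0 \<alpha> x)))"
proof (cases "x \<ge> 0")
  case True
  have heq: "heaviside (x - t k) = indicator {t k..} x" for k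
    by (simp add: heaviside_def indicator_def)
  have s: "(\<Sum>k=1..m. \<omega> k * (indicator {t k..} x * (poly Q x * w0 \<alpha> x))) =
     poly Q x * w0 \<alpha> x * (\<Sum>k=1..m. \<omega> k * heaviside (x - t k))"
    unfolding sum_distrib_left by (intro sum.cong refl) (simp only: heq mult_ac)
  show ?thesis using True unfolding s wt_def
    by (simp add: algebra_simps)
next
  case False
  hence "indicator {t k..} x = (0::real)" if "k \<in> {1..m}" for k
    using assms[OF that] by (simp add: indicator_def)
  thus ?thesis using False by (simp add: indicator_def)
qed

lemma Phi_decomp:
  fixes \<alpha> :: real
  assumes a: "\<alpha> > -1" and tpos: "\<And>k. k \<in> {1..m} \<Longrightarrow> t k \<ge> 0"
  shows "set_integrable lborel {0..} (\<lambda>x. poly Q x * wt \<alpha> m \<omega> t x)"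
    and "Phi \<alpha> m \<omega> t Q = \<omega> 0 * (LBINT x:{0..}. poly Q x * w0 \<alpha> x)
          + (\<Sum>k=1..m. \<omega> k * (LBINT x:{t k..}. poly Q x * w0 \<alpha> x))"
proof -
  have eq: "(\<lambda>x. indicator {0..} x *\<^sub>R (poly Q x * wt \<alpha> m \<omega> t x)) = (\<lambda>x.
    \<omega> 0 * (indicator {0..} x *\<^sub>R (poly Q x * w0 \<alpha> x)) +
    (\<Sum>k=1..m. \<omega> k * (indicator {t k..} x *\<^sub>R (poly Q x * w0 \<alpha> x))))"
    using wt_split[OF tpos] by auto
  have i0: "integrable lborel (\<lambda>x. indicator {0..} x *\<^sub>R (poly Q x * w0 \<alpha> x))"
    using poly_w0_int[of 0 \<alpha> Q] a unfolding set_integrable_def by auto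
  have ik: "integrable lborel (\<lambda>x. indicator {t k..} x *\<^sub>R (poly Q x * w0 \<alpha> x))" if "k \<in> {1..m}" for k
    using poly_w0_int[of "t k" \<alpha> Q] a tpos[OF that] unfolding set_integrable_def by auto
  show "set_integrable lborel {0..} (\<lambda>x. poly Q x * wt \<alpha> m \<omega> t x)"
    unfolding set_integrable_def eq using i0 ik
    by (intro Bochner_Integration.integrable_add Bochner_Integration.integrable_sum integrable_mult_right) auto
  show "Phi \<alpha> m \<omega> t Q = \<omega> 0 * (LBINT x:{0..}. poly Q x * w0 \<alpha> x)
          + (\<Sum>k=1..m. \<omega> k * (LBINT x:{t k..}. poly Q x * w0 \<alpha> x))"
    unfolding Phi_def set_lebesgue_integral_def eq using i0 ik
    by (subst Bochner_Integration.integral_add Bochner_Integration.integral_sum integral_mult_right;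
        auto intro!: Bochner_Integration.integrable_sum integrable_mult_right)+
qed

locale PhiSetup =
  fixes \<alpha> :: real and m :: nat and \<omega> t :: "nat \<Rightarrow> real"
  assumes a: "\<alpha> > -1" and tpos: "\<And>k. k \<in> {1..m} \<Longrightarrow> t k > 0"
begin

abbreviation "Ph \<equiv> Phi \<alpha> m \<omega> t"

lemma Ph_int: "set_integrable lborel {0..} (\<lambda>x. poly Q x * wt \<alpha> m \<omega> t x)"
  using Phi_decomp(1)[OF a] tpos by (meson less_imp_le)

lemma Ph_add: "Ph (p + q) = Ph p + Ph q"
  unfolding Phi_def using Ph_int[of p] Ph_int[of q]
  by (simp add: distrib_right set_integral_add)

lemma Ph_smult: "Ph (smult c p) = c * Ph p"
  unfolding Phi_def by (simp add: mult.assoc)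

lemma Ph_minus: "Ph (- p) = - Ph p"
  using Ph_smult[of "-1" p] by simp

lemma Ph_diff: "Ph (p - q) = Ph p - Ph q"
  using Ph_add[of p "-q"] Ph_minus[of q] by simp

lemma Ph_zero: "Ph 0 = 0"
  using Ph_smult[of 0 0] by simp

lemma Ph_sum: "Ph (\<Sum>i\<in>I. f i) = (\<Sum>i\<in>I. Ph (f i))"
  by (induction I rule: infinite_finite_induct) (auto simp: Ph_zero Ph_add)

lemma Ph_Lop: "Ph (Lop \<alpha> Q) = - (\<Sum>k=1..m. \<omega> k * (t k * w0 \<alpha> (t k) * poly Q (t k)))"
proof -
  have "Ph (Lop \<alpha> Q) = \<omega> 0 * (LBINT x:{0..}. poly (Lop \<alpha> Q) x * w0 \<alpha> x)
          + (\<Sum>k=1..m. \<omega> k * (LBINT x:{t k..}. poly (Lop \<alpha> Q) x * w0 \<alpha> x))"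
    using Phi_decomp(2)[OF a] tpos by (meson less_imp_le)
  also have "\<dots> = (\<Sum>k=1..m. \<omega> k * (- (t k * w0 \<alpha> (t k) * poly Q (t k))))"
  proof -
    have "(LBINT x:{t k..}. poly (Lop \<alpha> Q) x * w0 \<alpha> x) = - (t k * w0 \<alpha> (t k) * poly Q (t k))"
      if "k \<in> {1..m}" for k
    proof -
      have tk: "t k > 0" using tpos[OF that] .
      have "t k powr (\<alpha>+1) = t k * t k powr \<alpha>" using tk by (simp add: powr_add)
      thus ?thesis using G_FTC[of "t k" \<alpha> Q] tk a by (simp add: w0_def mult_ac)
    qed
    moreover have "(LBINT x:{0..}. poly (Lop \<alpha> Q) x * w0 \<alpha> x) = 0"
      using G_FTC[of 0 \<alpha> Q] a by simp
    ultimately show ?thesis by simp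
  qed
  also have "\<dots> = - (\<Sum>k=1..m. \<omega> k * (t k * w0 \<alpha> (t k) * poly Q (t k)))"
    by (simp add: sum_negf)
  finally show ?thesis .
qed


lemma step_sum:
  assumes "l \<le> m" "\<And>k. 1 \<le> k \<Longrightarrow> k \<le> l \<Longrightarrow> t k \<le> x" "\<And>k. l < k \<Longrightarrow> k \<le> m \<Longrightarrow> x < t k"
  shows "\<omega> 0 + (\<Sum>k=1..m. \<omega> k * heaviside (x - t k)) = (\<Sum>k=0..l. \<omega> k)"
proof -
  have "(\<Sum>k=1..m. \<omega> k * heaviside (x - t k)) = (\<Sum>k=1..l. \<omega> k)"
  proof (rule sum.mono_neutral_cong_right)
    show "\<forall>i\<in>{1..m} - {1..l}. \<omega> i * heaviside (x - t i) = 0"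
    proof
      fix i assume "i \<in> {1..m} - {1..l}"
      hence "x < t i" using assms(3)[of i] by auto
      thus "\<omega> i * heaviside (x - t i) = 0" by (simp add: heaviside_def)
    qed
    show "\<And>k. k \<in> {1..l} \<Longrightarrow> \<omega> k * heaviside (x - t k) = \<omega> k"
      using assms(2) by (auto simp: heaviside_def)
  qed (use assms(1) in auto)
  moreover have "(\<Sum>k=0..l. \<omega> k) = \<omega> 0 + (\<Sum>k=1..l. \<omega> k)"
    using sum.atLeast_Suc_atMost[of 0 l \<omega>] by simp
  ultimately show ?thesis by simp
qed

end

locale PhiSetup2 = PhiSetup +
  assumes tmono: "\<And>k. 1 \<le> k \<Longrightarrow> k < m \<Longrightarrow> t k < t (Suc k)"
    and psum_nonneg: "\<And>l. l \<le> m \<Longrightarrow> (\<Sum>k=0..l. \<omega> k) \<ge> 0"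
    and psum_pos: "\<exists>l\<le>m. (\<Sum>k=0..l. \<omega> k) > 0"
begin

lemma tmono': "1 \<le> i \<Longrightarrow> i \<le> j \<Longrightarrow> j \<le> m \<Longrightarrow> t i \<le> t j"
proof (induction j)
  case 0 thus ?case by simp
next
  case (Suc j)
  show ?case
  proof (cases "i = Suc j")
    case False
    hence "t i \<le> t j" "1 \<le> j" using Suc by auto
    moreover have "t j < t (Suc j)" using tmono[of j] Suc \<open>1 \<le> j\<close> by auto
    ultimately show ?thesis by simp
  qed simp
qed

lemma wt_nonneg:
  assumes "x \<ge> 0" shows "wt \<alpha> m \<omega> t x \<ge> 0"
proof -
  define S where "S = {0} \<union> {k\<in>{1..m}. t k \<le> x}"
  define l where "l = Max S"
  have fin: "finite S" "S \<noteq> {}" by (auto simp: S_def)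
  have lS: "l \<in> S" unfolding l_def using fin by (rule Max_in)
  have lm: "l \<le> m" using lS by (auto simp: S_def)
  have "\<omega> 0 + (\<Sum>k=1..m. \<omega> k * heaviside (x - t k)) = (\<Sum>k=0..l. \<omega> k)"
  proof (rule step_sum[OF lm])
    fix k assume k: "1 \<le> k" "k \<le> l"
    hence "l \<noteq> 0" by auto
    hence "t l \<le> x" "1 \<le> l" using lS by (auto simp: S_def)
    thus "t k \<le> x" using tmono'[of k l] k lm by linarith
  next
    fix k assume k: "l < k" "k \<le> m"
    show "x < t k"
    proof (rule ccontr)
      assume "\<not> x < t k"
      hence "k \<in> S" using k by (auto simp: S_def)
      hence "k \<le> l" unfolding l_def using fin by simp
      thus False using k by simp
    qed
  qed
  moreover have "w0 \<alpha> x \<ge> 0" by (simp add: w0_def)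
  ultimately show ?thesis unfolding wt_def using psum_nonneg[OF lm] by simp
qed

lemma Ph_pos:
  assumes Q: "Q \<noteq> 0" shows "Ph (Q * Q) > 0"
proof -
  obtain l where lm: "l \<le> m" and Sl: "(\<Sum>k=0..l. \<omega> k) > 0" using psum_pos by blast
  define a where "a = (if l = 0 then 0 else t l)"
  define b where "b = (if l = m then a + 1 else t (Suc l))"
  have a0: "a \<ge> 0" unfolding a_def using tpos[of l] lm by auto
  have ab: "a < b" unfolding a_def b_def using tpos[of 1] tmono[of l] lm by auto
  have wpos: "wt \<alpha> m \<omega> t x > 0" if x: "a < x" "x < b" for x
  proof -
    have "\<omega> 0 + (\<Sum>k=1..m. \<omega> k * heaviside (x - t k)) = (\<Sum>k=0..l. \<omega> k)"
    proof (rule step_sum[OF lm])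
      fix k assume k: "1 \<le> k" "k \<le> l"
      hence "a = t l" by (auto simp: a_def)
      thus "t k \<le> x" using tmono'[of k l] k lm x by linarith
    next
      fix k assume k: "l < k" "k \<le> m"
      hence "b = t (Suc l)" by (auto simp: b_def)
      moreover have "t (Suc l) \<le> t k" using tmono'[of "Suc l" k] k by auto
      ultimately show "x < t k" using x by linarith
    qed
    moreover have "w0 \<alpha> x > 0" using x a0 by (simp add: w0_def)
    ultimately show ?thesis unfolding wt_def using Sl by simp
  qed
  define f where "f = (\<lambda>x. indicator {0..} x * (poly (Q*Q) x * wt \<alpha> m \<omega> t x))"
  have fint: "integrable lborel f" using Ph_int[of "Q*Q"] unfolding f_def set_integrable_def by simp
  have fnn: "f x \<ge> 0" for x
    unfolding f_def using wt_nonneg[of x] by (auto simp: indicator_def)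
  have Phf: "Ph (Q*Q) = integral\<^sup>L lborel f"
    unfolding Phi_def set_lebesgue_integral_def f_def by simp
  have "Ph (Q*Q) \<ge> 0" unfolding Phf using fnn by simp
  moreover have "Ph (Q*Q) \<noteq> 0"
  proof
    assume "Ph (Q*Q) = 0"
    hence "AE x in lborel. f x = 0"
      using integral_nonneg_eq_0_iff_AE[OF fint] fnn Phf by simp
    moreover have "AE x in lborel. x \<notin> {x. poly Q x = 0}"
      by (rule AE_not_in[OF finite_imp_null_set_lborel]) (rule poly_roots_finite[OF Q])
    ultimately have "AE x in lborel. x \<notin> {a<..<b}"
    proof eventually_elim
      case (elim x)
      show ?case
      proof
        assume x: "x \<in> {a<..<b}"
        hence "poly Q x * poly Q x > 0" using elim(2) by (metis not_real_square_gt_zero mem_Collect_eq)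
        moreover have "wt \<alpha> m \<omega> t x > 0" using wpos x by auto
        moreover have "x \<ge> 0" using x a0 by auto
        ultimately have "f x > 0" unfolding f_def by simp
        thus False using elim(1) by simp
      qed
    qed
    hence "emeasure lborel {a<..<b} = 0"
      by (subst (asm) AE_iff_measurable[of "{a<..<b}"]) auto
    thus False using ab by simp
  qed
  ultimately show ?thesis by simp
qed

end

lemma coeff_xderiv: "coeff (pCons 0 (pderiv p)) j = of_nat j * coeff (p::real poly) j"
  by (cases j) (auto simp: coeff_pderiv)

lemma degree_xderiv: "degree (pCons 0 (pderiv (p::real poly))) \<le> degree p"
proof (cases "pderiv p = 0")
  case False
  hence "degree p \<ge> 1"
    by (metis less_one not_le pderiv_eq_0_iff)
  thus ?thesis using False by (simp add: degree_pderiv)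
qed simp

lemma deg_drop:
  assumes "degree (p::real poly) \<le> Suc k" "coeff p (Suc k) = 0" shows "degree p \<le> k"
proof (rule ccontr)
  assume "\<not> degree p \<le> k"
  hence "degree p = Suc k" using assms(1) by simp
  hence "p = 0" using assms(2) by (metis leading_coeff_0_iff)
  thus False using \<open>degree p = Suc k\<close> by simp
qed

lemma pCons0_mult: "pCons 0 (p * q) = p * pCons 0 (q::real poly)"
  by simp

locale PhiSetup3 = PhiSetup2 +
  fixes P :: "nat \<Rightarrow> real poly"
  assumes ops: "monic_OPS \<alpha> m \<omega> t P"
begin

abbreviation "h \<equiv> hn \<alpha> m \<omega> t P"

lemma degP: "degree (P n) = n"
  using ops unfolding monic_OPS_def by auto

lemma leadP: "coeff (P n) n = 1"
  using ops unfolding monic_OPS_def by metis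

lemma Ph_monom: "j < n \<Longrightarrow> Ph (P n * monom c j) = 0"
proof -
  assume j: "j < n"
  have "Ph (P n * monom 1 j) = 0"
    using ops j unfolding monic_OPS_def Phi_def by (simp add: poly_monom)
  moreover have "monom c j = smult c (monom 1 j)"
    by (simp add: smult_monom)
  hence "P n * monom c j = smult c (P n * monom 1 j)"
    by simp
  ultimately show ?thesis by (simp add: Ph_smult)
qed

lemma Ph_orth: "degree Q < n \<Longrightarrow> Ph (P n * Q) = 0"
proof -
  assume d: "degree Q < n"
  hence "Q = (\<Sum>i\<le>n-1. monom (coeff Q i) i)"
    by (intro poly_as_sum_of_monoms'[symmetric]) auto
  hence "Ph (P n * Q) = (\<Sum>i\<le>n-1. Ph (P n * monom (coeff Q i) i))"
    by (metis Ph_sum sum_distrib_left)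
  also have "\<dots> = 0" using d by (intro sum.neutral) (auto intro!: Ph_monom)
  finally show ?thesis .
qed

lemma h_eq: "h j = Ph (P j * P j)"
  unfolding hn_def Phi_def by (simp add: power2_eq_square)

lemma Ph_lead: "degree Q \<le> j \<Longrightarrow> Ph (P j * Q) = coeff Q j * h j"
proof -
  assume dQ: "degree Q \<le> j"
  define D where "D = Q - smult (coeff Q j) (P j)"
  have dD: "degree D \<le> j" unfolding D_def using dQ degP[of j]
    by (intro degree_diff_le) (auto intro: order_trans[OF degree_smult_le])
  have cD: "coeff D j = 0" unfolding D_def by (simp add: leadP)
  have "Ph (P j * D) = 0"
  proof (cases "D = 0")
    case True thus ?thesis by (simp add: Ph_zero)
  next
    case False
    hence "degree D \<noteq> j" using cD by (metis leading_coeff_0_iff)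
    thus ?thesis using dD by (intro Ph_orth) simp
  qed
  moreover have "P j * Q = smult (coeff Q j) (P j * P j) + P j * D"
    unfolding D_def by (simp add: algebra_simps)
  ultimately show ?thesis by (simp add: Ph_add Ph_smult h_eq)
qed

lemma h_pos: "h j > 0"
proof -
  have "P j \<noteq> 0" using leadP[of j] by auto
  thus ?thesis using Ph_pos h_eq by simp
qed

end

context PhiSetup3 begin

lemma Lop_prod: "Lop \<alpha> (p * q) = q * pCons 0 (pderiv p) + p * pCons 0 (pderiv q) + smult (\<alpha>+1) (p * q) - p * pCons 0 q"
  unfolding Lop_def pderiv_mult by (simp add: algebra_simps)

lemma formula1:
  assumes "n = Suc k"
  shows "- coeff (P n) k * h k - h n = - (\<Sum>i=1..m. \<omega> i * (t i * w0 \<alpha> (t i) * (poly (P n) (t i) * poly (P k) (t i))))"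
proof -
  have key: "Ph (Lop \<alpha> (P n * P k)) = - (\<Sum>i=1..m. \<omega> i * (t i * w0 \<alpha> (t i) * (poly (P n) (t i) * poly (P k) (t i))))"
    using Ph_Lop[of "P n * P k"] by simp
  have T1: "Ph (P n * pCons 0 (pderiv (P k))) = 0"
    using degree_xderiv[of "P k"] degP[of k] assms by (intro Ph_orth) simp
  define D where "D = pCons 0 (pderiv (P n)) - smult (of_nat n) (P n)"
  have dD: "degree D \<le> k"
  proof (rule deg_drop)
    show "degree D \<le> Suc k" unfolding D_def using degree_xderiv[of "P n"] degP[of n] assms
      by (intro degree_diff_le) (auto intro: order_trans[OF degree_smult_le])
    show "coeff D (Suc k) = 0" unfolding D_def coeff_diff coeff_smult coeff_xderiv using assms by (simp add: leadP)
  qed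
  have cD: "coeff D k = - coeff (P n) k"
    unfolding D_def coeff_diff coeff_smult coeff_xderiv using assms by (simp add: algebra_simps)
  have PnPk: "Ph (P n * P k) = 0" using degP[of k] assms by (intro Ph_orth) simp
  have T2: "Ph (P k * pCons 0 (pderiv (P n))) = - coeff (P n) k * h k"
  proof -
    have "P k * pCons 0 (pderiv (P n)) = smult (of_nat n) (P n * P k) + P k * D"
      unfolding D_def by (simp add: algebra_simps)
    thus ?thesis using Ph_lead[OF dD] cD PnPk by (simp add: Ph_add Ph_smult)
  qed
  have T4: "Ph (P n * pCons 0 (P k)) = h n"
  proof -
    have "degree (pCons 0 (P k)) \<le> n" using degP[of k] assms
      by (metis degree_pCons_le)
    thus ?thesis using Ph_lead[of "pCons 0 (P k)" n] assms by (simp add: leadP)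
  qed
  have "Ph (Lop \<alpha> (P n * P k)) = - coeff (P n) k * h k - h n"
    unfolding Lop_prod Ph_diff Ph_add Ph_smult T1 T2 T4 PnPk by simp
  thus ?thesis using key by simp
qed

definition q :: "nat \<Rightarrow> real" where "q j = coeff (pCons 0 (P j)) j"

lemma formula2:
  "(2 * real j + \<alpha> + 1) * h j - (q j - q (Suc j)) * h j = - (\<Sum>i=1..m. \<omega> i * (t i * w0 \<alpha> (t i) * (poly (P j) (t i))\<^sup>2))"
proof -
  have key: "Ph (Lop \<alpha> (P j * P j)) = - (\<Sum>i=1..m. \<omega> i * (t i * w0 \<alpha> (t i) * (poly (P j) (t i))\<^sup>2))"
    using Ph_Lop[of "P j * P j"] by (simp add: power2_eq_square)
  have T1: "Ph (P j * pCons 0 (pderiv (P j))) = real j * h j"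
    using Ph_lead[OF degree_xderiv[of "P j", unfolded degP]] by (simp add: coeff_xderiv leadP)
  define D where "D = pCons 0 (P j) - P (Suc j)"
  have dD: "degree D \<le> j"
  proof (rule deg_drop)
    show "degree D \<le> Suc j" unfolding D_def using degP[of j] degP[of "Suc j"]
      by (intro degree_diff_le) (auto intro: order_trans[OF degree_pCons_le])
    show "coeff D (Suc j) = 0" unfolding D_def by (simp add: leadP)
  qed
  have cD: "coeff D j = q j - q (Suc j)" unfolding D_def q_def by simp
  have PP: "Ph (P j * P (Suc j)) = 0"
    using Ph_orth[of "P j" "Suc j"] degP[of j] by (simp add: mult.commute)
  have T4: "Ph (P j * pCons 0 (P j)) = (q j - q (Suc j)) * h j"
  proof -
    have "P j * pCons 0 (P j) = P j * D + P j * P (Suc j)" unfolding D_def by (simp add: algebra_simps)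
    thus ?thesis using Ph_lead[OF dD] cD PP by (simp add: Ph_add)
  qed
  have "Ph (Lop \<alpha> (P j * P j)) = 2 * (real j * h j) + (\<alpha>+1) * h j - (q j - q (Suc j)) * h j"
    unfolding Lop_prod Ph_diff Ph_add Ph_smult T1 T4 h_eq[symmetric] by simp
  thus ?thesis using key by (simp add: algebra_simps)
qed

end

context PhiSetup3 begin

lemma final1:
  assumes "n \<ge> 1"
  shows "coeff (P n) (n - 1) = (\<Sum>k=1..m. t k * rnk \<alpha> m \<omega> t P n k) - betan \<alpha> m \<omega> t P n"
proof -
  obtain k where nk: "n = Suc k" using assms by (cases n) auto
  have hk: "h k > 0" by (rule h_pos)
  have "(\<Sum>i=1..m. t i * rnk \<alpha> m \<omega> t P n i) = (\<Sum>i=1..m. \<omega> i * (t i * w0 \<alpha> (t i) * (poly (P n) (t i) * poly (P k) (t i)))) / h k"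
    unfolding sum_divide_distrib rnk_def nk by (intro sum.cong refl) (simp add: field_simps)
  also have "\<dots> = coeff (P n) k + h n / h k"
    using formula1[OF nk] hk by (simp add: field_simps)
  finally show ?thesis unfolding betan_def nk by simp
qed

lemma q_formula:
  "q n = - (\<Sum>j<n. \<Sum>i=1..m. t i * Rnk \<alpha> m \<omega> t P j i) - real n * (real n + \<alpha>)"
proof (induction n)
  case 0 thus ?case by (simp add: q_def)
next
  case (Suc n)
  have hn: "h n > 0" by (rule h_pos)
  have S: "(\<Sum>i=1..m. t i * Rnk \<alpha> m \<omega> t P n i) = (\<Sum>i=1..m. \<omega> i * (t i * w0 \<alpha> (t i) * (poly (P n) (t i))\<^sup>2)) / h n"
    unfolding sum_divide_distrib Rnk_def by (intro sum.cong refl) (simp add: field_simps)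
  have "q n - q (Suc n) = 2 * real n + \<alpha> + 1 + (\<Sum>i=1..m. t i * Rnk \<alpha> m \<omega> t P n i)"
    using formula2[of n] hn unfolding S by (simp add: field_simps)
  thus ?case using Suc.IH by (simp add: algebra_simps)
qed

lemma final2:
  assumes "n \<ge> 1"
  shows "coeff (P n) (n - 1) = - (\<Sum>k=1..m. t k * (\<Sum>j=0..n-1. Rnk \<alpha> m \<omega> t P j k)) - real n * (real n + \<alpha>)"
proof -
  obtain k where nk: "n = Suc k" using assms by (cases n) auto
  have "coeff (P n) (n - 1) = q n" unfolding q_def nk by simp
  moreover have "(\<Sum>k=1..m. t k * (\<Sum>j=0..n-1. Rnk \<alpha> m \<omega> t P j k)) = (\<Sum>j<n. \<Sum>i=1..m. t i * Rnk \<alpha> m \<omega> t P j i)"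
  proof -
    have "{0..n-1} = {..<n}" using nk by auto
    thus ?thesis by (simp add: sum_distrib_left) (rule sum.swap)
  qed
  ultimately show ?thesis using q_formula[of n] by simp
qed

end

lemma tpos_lemma:
  assumes "0 < t (1::nat)" "\<And>k. 1 \<le> k \<Longrightarrow> k < m \<Longrightarrow> t k < t (Suc k)"
  shows "k \<in> {1..m} \<Longrightarrow> (0::real) < t k"
proof (induction k)
  case (Suc k)
  thus ?case using assms by (cases "k = 0") (auto simp: less_trans)
qed simp

theorem lemma2p7:
  fixes \<alpha> :: real and m n :: nat and \<omega> t :: "nat \<Rightarrow> real" and P :: "nat \<Rightarrow> real poly"
  assumes "m \<ge> 1" and "\<alpha> > -1"
    and "0 < t 1" and "\<And>k. 1 \<le> k \<Longrightarrow> k < m \<Longrightarrow> t k < t (Suc k)"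
    and "\<And>l. l \<le> m \<Longrightarrow> (\<Sum>k=0..l. \<omega> k) \<ge> 0"
    and "\<exists>l\<le>m. (\<Sum>k=0..l. \<omega> k) > 0"
    and "monic_OPS \<alpha> m \<omega> t P"
    and "n \<ge> 1"
  shows "coeff (P n) (n - 1) = (\<Sum>k=1..m. t k * rnk \<alpha> m \<omega> t P n k) - betan \<alpha> m \<omega> t P n
       \<and> coeff (P n) (n - 1) = - (\<Sum>k=1..m. t k * (\<Sum>j=0..n-1. Rnk \<alpha> m \<omega> t P j k)) - real n * (real n + \<alpha>)"
proof -
  interpret PhiSetup3 \<alpha> m \<omega> t P
  proof
    show "\<And>k. k \<in> {1..m} \<Longrightarrow> 0 < t k" using tpos_lemma[of t m] assms(3,4) by blast
  qed (use assms in auto)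
  show ?thesis using final1[OF assms(8)] final2[OF assms(8)] by simp
qed

end
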